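(* Let $T$ be a left-invariant symmetric $(0,2)$-tensor field on $G$. If $g$ is a critical point of $S|_{\mathcal M_T^0}$, then $S(g)=0$.
   Context: Let $G$ be a connected non-compact simple Lie group with Lie algebra $\mathfrak g$, $K$ a maximal compact subgroup with Lie algebra $\mathfrak k$, $B$ the Killing form of $\mathfrak g$, and $\mathfrak p$ the $B$-orthogonal complement of $\mathfrak k$ in $\mathfrak g$. Let $Q=B|_{\mathfrak p}-B|_{\mathfrak k}$. Write $\mathfrak k=\mathfrak k_1\oplus\cdots\oplus\mathfrak k_{r+s}$, where $\mathfrak k_1,\dots,\mathfrak k_r$ are the simple ideals of $[\mathfrak k,\mathfrak k]$, $\mathfrak k_{r+1}$ is the centre of $\mathfrak k$, and $s=1$ if the centre is nontrivial, $s=0$ otherwise. Left-invariant tensor fields on $G$ are identified with bilinear forms on $\mathfrak g$; $Q|_{\mathfrak u}$ denotes $Q$ restricted to $\mathfrak u$ and extended by zero on its $Q$-orthogonal complement. $\mathcal M_K$ is the set of left-invariant metrics on $G$ naturally reductive with respect to $G\times K$ (acting by $(x,k)y=xyk^{-1}$), which by a theorem of Gordon are exactly the metrics $\beta Q|_{\mathfrak p}+\sum_i\alpha_iQ|_{\mathfrak k_i}$ with $\beta,\alpha_i>0$; it is a manifold via these parameters. $S$ is the scalar curvature functional, and $\mathcal M_T^0=\{g\in\mathcal M_K:\mathrm{tr}_gT=0\}$ with the induced manifold structure. *)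

theory Defs
  imports "HOL-Analysis.Analysis"
begin

text \<open>Everything is left-invariant, so we work on the Lie algebra g of G,
modelled as a finite-dimensional real vector space 'a (of class euclidean_space;
its built-in inner product is used only as an auxiliary device to compute
basis-independent traces) with a bracket br.\<close>

definition lie_algebra :: "('a::euclidean_space \<Rightarrow> 'a \<Rightarrow> 'a) \<Rightarrow> bool" where
  "lie_algebra br \<longleftrightarrow> bilinear br \<and> (\<forall>x. br x x = 0) \<and>
     (\<forall>x y z. br x (br y z) + br y (br z x) + br z (br x y) = 0)"

definition ltrace :: "('a::euclidean_space \<Rightarrow> 'a) \<Rightarrow> real" where
  "ltrace f = (\<Sum>u\<in>Basis. inner (f u) u)"

definition killing :: "('a::euclidean_space \<Rightarrow> 'a \<Rightarrow> 'a) \<Rightarrow> 'a \<Rightarrow> 'a \<Rightarrow> real" where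
  "killing br x y = ltrace (\<lambda>z. br x (br y z))"

definition lie_ideal_in :: "('a::euclidean_space \<Rightarrow> 'a \<Rightarrow> 'a) \<Rightarrow> 'a set \<Rightarrow> 'a set \<Rightarrow> bool" where
  "lie_ideal_in br L I \<longleftrightarrow> subspace I \<and> I \<subseteq> L \<and> (\<forall>x\<in>L. \<forall>y\<in>I. br x y \<in> I)"

definition lie_subalgebra :: "('a::euclidean_space \<Rightarrow> 'a \<Rightarrow> 'a) \<Rightarrow> 'a set \<Rightarrow> bool" where
  "lie_subalgebra br L \<longleftrightarrow> subspace L \<and> (\<forall>x\<in>L. \<forall>y\<in>L. br x y \<in> L)"

definition simple_lie_algebra :: "('a::euclidean_space \<Rightarrow> 'a \<Rightarrow> 'a) \<Rightarrow> bool" where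
  "simple_lie_algebra br \<longleftrightarrow> lie_algebra br \<and> (\<exists>x y. br x y \<noteq> 0) \<and>
     (\<forall>I. lie_ideal_in br UNIV I \<longrightarrow> I = {0} \<or> I = UNIV)"

text \<open>A simple real Lie algebra is compact iff its Killing form is negative definite.\<close>
definition noncompact_lie_algebra :: "('a::euclidean_space \<Rightarrow> 'a \<Rightarrow> 'a) \<Rightarrow> bool" where
  "noncompact_lie_algebra br \<longleftrightarrow> \<not> (\<forall>x. x \<noteq> 0 \<longrightarrow> killing br x x < 0)"

definition B_orth :: "('a::euclidean_space \<Rightarrow> 'a \<Rightarrow> 'a) \<Rightarrow> 'a set \<Rightarrow> 'a set" where
  "B_orth br K = {y. \<forall>x\<in>K. killing br x y = 0}"

text \<open>k is the Lie algebra of a maximal compact subgroup: g = k + p is a Cartan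
decomposition (B negative definite on k, positive definite on p = k^perp_B).\<close>
definition cartan_subalgebra_k :: "('a::euclidean_space \<Rightarrow> 'a \<Rightarrow> 'a) \<Rightarrow> 'a set \<Rightarrow> bool" where
  "cartan_subalgebra_k br K \<longleftrightarrow> lie_subalgebra br K \<and>
     (\<forall>x\<in>K. x \<noteq> 0 \<longrightarrow> killing br x x < 0) \<and>
     (\<forall>y\<in>B_orth br K. y \<noteq> 0 \<longrightarrow> killing br y y > 0)"

definition derived :: "('a::euclidean_space \<Rightarrow> 'a \<Rightarrow> 'a) \<Rightarrow> 'a set \<Rightarrow> 'a set" where
  "derived br K = span {br x y | x y. x \<in> K \<and> y \<in> K}"

definition lie_centre :: "('a::euclidean_space \<Rightarrow> 'a \<Rightarrow> 'a) \<Rightarrow> 'a set \<Rightarrow> 'a set" where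
  "lie_centre br K = {z\<in>K. \<forall>x\<in>K. br x z = 0}"

definition simple_ideal :: "('a::euclidean_space \<Rightarrow> 'a \<Rightarrow> 'a) \<Rightarrow> 'a set \<Rightarrow> 'a set \<Rightarrow> bool" where
  "simple_ideal br D I \<longleftrightarrow> lie_ideal_in br D I \<and> (\<exists>x\<in>I. \<exists>y\<in>I. br x y \<noteq> 0) \<and>
     (\<forall>J. lie_ideal_in br I J \<longrightarrow> J = {0} \<or> J = I)"

definition k_factors :: "('a::euclidean_space \<Rightarrow> 'a \<Rightarrow> 'a) \<Rightarrow> 'a set \<Rightarrow> 'a set set" where
  "k_factors br K = {I. simple_ideal br (derived br K) I} \<union>
     (if lie_centre br K = {0} then {} else {lie_centre br K})"

definition kproj :: "('a::euclidean_space \<Rightarrow> 'a \<Rightarrow> 'a) \<Rightarrow> 'a set \<Rightarrow> 'a \<Rightarrow> 'a" where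
  "kproj br K x = (THE w. w \<in> K \<and> x - w \<in> B_orth br K)"

definition cartanQ :: "('a::euclidean_space \<Rightarrow> 'a \<Rightarrow> 'a) \<Rightarrow> 'a set \<Rightarrow> 'a \<Rightarrow> 'a \<Rightarrow> real" where
  "cartanQ br K x y = killing br (x - kproj br K x) (y - kproj br K y)
                      - killing br (kproj br K x) (kproj br K y)"

definition qproj :: "('a::euclidean_space \<Rightarrow> 'a \<Rightarrow> 'a) \<Rightarrow> 'a set \<Rightarrow> 'a set \<Rightarrow> 'a \<Rightarrow> 'a" where
  "qproj br K U x = (THE w. w \<in> U \<and> (\<forall>z\<in>U. cartanQ br K (x - w) z = 0))"

text \<open>Q|_U : Q restricted to U, extended by zero on the Q-orthogonal complement.\<close>
definition Qrestr :: "('a::euclidean_space \<Rightarrow> 'a \<Rightarrow> 'a) \<Rightarrow> 'a set \<Rightarrow> 'a set \<Rightarrow> 'a \<Rightarrow> 'a \<Rightarrow> real" where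
  "Qrestr br K U x y = cartanQ br K (qproj br K U x) (qproj br K U y)"

definition index_spaces :: "('a::euclidean_space \<Rightarrow> 'a \<Rightarrow> 'a) \<Rightarrow> 'a set \<Rightarrow> 'a set set" where
  "index_spaces br K = insert (B_orth br K) (k_factors br K)"

text \<open>The metric beta Q|_p + sum_i alpha_i Q|_{k_i} with parameters c (c p = beta, c k_i = alpha_i).\<close>
definition nr_metric :: "('a::euclidean_space \<Rightarrow> 'a \<Rightarrow> 'a) \<Rightarrow> 'a set \<Rightarrow> ('a set \<Rightarrow> real) \<Rightarrow> 'a \<Rightarrow> 'a \<Rightarrow> real" where
  "nr_metric br K c x y = (\<Sum>U\<in>index_spaces br K. c U * Qrestr br K U x y)"

definition in_MK :: "('a::euclidean_space \<Rightarrow> 'a \<Rightarrow> 'a) \<Rightarrow> 'a set \<Rightarrow> ('a set \<Rightarrow> real) \<Rightarrow> bool" where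
  "in_MK br K c \<longleftrightarrow> (\<forall>U\<in>index_spaces br K. c U > 0)"

definition metric_trace :: "('a::euclidean_space \<Rightarrow> 'a \<Rightarrow> real) \<Rightarrow> ('a \<Rightarrow> 'a \<Rightarrow> real) \<Rightarrow> real" where
  "metric_trace g b = ltrace (THE A. linear A \<and> (\<forall>x y. g (A x) y = b x y))"

text \<open>Levi-Civita connection of the left-invariant metric g (Koszul formula).\<close>
definition levi_civita :: "('a::euclidean_space \<Rightarrow> 'a \<Rightarrow> 'a) \<Rightarrow> ('a \<Rightarrow> 'a \<Rightarrow> real) \<Rightarrow> 'a \<Rightarrow> 'a \<Rightarrow> 'a" where
  "levi_civita br g X Y = (THE v. \<forall>Z. g v Z = (g (br X Y) Z - g (br Y Z) X + g (br Z X) Y) / 2)"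

definition riem :: "('a::euclidean_space \<Rightarrow> 'a \<Rightarrow> 'a) \<Rightarrow> ('a \<Rightarrow> 'a \<Rightarrow> real) \<Rightarrow> 'a \<Rightarrow> 'a \<Rightarrow> 'a \<Rightarrow> 'a" where
  "riem br g X Y Z = levi_civita br g X (levi_civita br g Y Z)
                     - levi_civita br g Y (levi_civita br g X Z)
                     - levi_civita br g (br X Y) Z"

definition ricci :: "('a::euclidean_space \<Rightarrow> 'a \<Rightarrow> 'a) \<Rightarrow> ('a \<Rightarrow> 'a \<Rightarrow> real) \<Rightarrow> 'a \<Rightarrow> 'a \<Rightarrow> real" where
  "ricci br g Y Z = ltrace (\<lambda>X. riem br g X Y Z)"

definition scalar_curv :: "('a::euclidean_space \<Rightarrow> 'a \<Rightarrow> 'a) \<Rightarrow> ('a \<Rightarrow> 'a \<Rightarrow> real) \<Rightarrow> real" where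
  "scalar_curv br g = metric_trace g (ricci br g)"

definition in_MT0 :: "('a::euclidean_space \<Rightarrow> 'a \<Rightarrow> 'a) \<Rightarrow> 'a set \<Rightarrow> ('a \<Rightarrow> 'a \<Rightarrow> real) \<Rightarrow> ('a set \<Rightarrow> real) \<Rightarrow> bool" where
  "in_MT0 br K T c \<longleftrightarrow> in_MK br K c \<and> metric_trace (nr_metric br K c) T = 0"

definition critical_S_MT0 :: "('a::euclidean_space \<Rightarrow> 'a \<Rightarrow> 'a) \<Rightarrow> 'a set \<Rightarrow> ('a \<Rightarrow> 'a \<Rightarrow> real) \<Rightarrow> ('a set \<Rightarrow> real) \<Rightarrow> bool" where
  "critical_S_MT0 br K T c \<longleftrightarrow> in_MT0 br K T c \<and>
     (\<forall>(\<gamma> :: real \<Rightarrow> 'a set \<Rightarrow> real) \<epsilon>.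
        \<epsilon> > 0 \<and> (\<forall>U\<in>index_spaces br K. \<gamma> 0 U = c U) \<and>
        (\<forall>U\<in>index_spaces br K. (\<lambda>t. \<gamma> t U) differentiable (at 0)) \<and>
        (\<forall>t. \<bar>t\<bar> < \<epsilon> \<longrightarrow> in_MT0 br K T (\<gamma> t))
        \<longrightarrow> ((\<lambda>t. scalar_curv br (nr_metric br K (\<gamma> t))) has_real_derivative 0) (at 0))"

end

theory Submission
  imports Defs
begin
lemma ltrace_add: "ltrace (\<lambda>x. f x + h x) = ltrace f + ltrace h"
  by (simp add: ltrace_def inner_add_left sum.distrib)

lemma ltrace_diff: "ltrace (\<lambda>x. f x - h x) = ltrace f - ltrace h"
  by (simp add: ltrace_def inner_diff_left sum_subtractf)

lemma ltrace_scale: "ltrace (\<lambda>x. a *\<^sub>R f x) = a * ltrace f"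
  by (simp add: ltrace_def sum_distrib_left)

lemma ltrace_comm:
  assumes "linear f" "linear h"
  shows "ltrace (\<lambda>x. f (h x)) = ltrace (\<lambda>x. h (f x))"
proof -
  have e1: "f (h u) = (\<Sum>v\<in>Basis. inner (h u) v *\<^sub>R f v)" for u
  proof -
    have "f (h u) = f (\<Sum>v\<in>Basis. inner (h u) v *\<^sub>R v)" by (simp add: euclidean_representation)
    also have "\<dots> = (\<Sum>v\<in>Basis. inner (h u) v *\<^sub>R f v)"
      using assms(1) by (simp add: linear_sum linear_scale)
    finally show ?thesis .
  qed
  have e2: "h (f u) = (\<Sum>v\<in>Basis. inner (f u) v *\<^sub>R h v)" for u
  proof -
    have "h (f u) = h (\<Sum>v\<in>Basis. inner (f u) v *\<^sub>R v)" by (simp add: euclidean_representation)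
    also have "\<dots> = (\<Sum>v\<in>Basis. inner (f u) v *\<^sub>R h v)"
      using assms(2) by (simp add: linear_sum linear_scale)
    finally show ?thesis .
  qed
  have "ltrace (\<lambda>x. f (h x)) = (\<Sum>u\<in>Basis. \<Sum>v\<in>Basis. inner (h u) v * inner (f v) u)"
    unfolding ltrace_def e1 by (simp add: inner_sum_left)
  also have "\<dots> = (\<Sum>v\<in>Basis. \<Sum>u\<in>Basis. inner (h u) v * inner (f v) u)"
    by (rule sum.swap)
  also have "\<dots> = ltrace (\<lambda>x. h (f x))"
    unfolding ltrace_def e2 by (simp add: inner_sum_left mult.commute)
  finally show ?thesis .
qed

lemma lie_bilinear: "lie_algebra br \<Longrightarrow> bilinear br"
  by (simp add: lie_algebra_def)

lemma lie_anti: assumes "lie_algebra br" shows "br y x = - br x y"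
proof -
  have b: "bilinear br" using assms by (simp add: lie_algebra_def)
  have "br (x + y) (x + y) = 0" using assms by (simp add: lie_algebra_def)
  hence "br x x + br x y + (br y x + br y y) = 0"
    using b by (simp add: bilinear_ladd bilinear_radd)
  moreover have "br x x = 0" "br y y = 0" using assms by (auto simp add: lie_algebra_def)
  ultimately show ?thesis by (simp add: eq_neg_iff_add_eq_0 add.commute)
qed

lemma lie_jacobi: "lie_algebra br \<Longrightarrow> br x (br y z) + br y (br z x) + br z (br x y) = 0"
  by (simp add: lie_algebra_def)

lemma bil_linl: "bilinear h \<Longrightarrow> linear (\<lambda>x. h x y)" by (simp add: bilinear_def)
lemma bil_linr: "bilinear h \<Longrightarrow> linear (\<lambda>y. h x y)" by (simp add: bilinear_def)

lemma killing_bilinear: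
  assumes "bilinear br" shows "bilinear (killing br)"
proof -
  have l1: "linear (\<lambda>x. killing br x y)" for y
    unfolding killing_def ltrace_def
    by (rule linearI) (simp_all add: assms bilinear_ladd bilinear_lmul inner_add_left sum.distrib sum_distrib_left)
  have l2: "linear (\<lambda>y. killing br x y)" for x
    unfolding killing_def ltrace_def
    by (rule linearI) (simp_all add: assms bilinear_ladd bilinear_radd bilinear_lmul bilinear_rmul inner_add_left sum.distrib sum_distrib_left)
  show ?thesis using l1 l2 by (simp add: bilinear_def)
qed

lemma killing_sym:
  assumes "bilinear br" shows "killing br x y = killing br y x"
  unfolding killing_def
  by (rule ltrace_comm) (use assms in \<open>simp_all add: bilinear_def\<close>)

lemma killing_invariant:
  assumes L: "lie_algebra br"
  shows "killing br (br x y) z = killing br x (br y z)"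
proof -
  have b: "bilinear br" using L by (simp add: lie_algebra_def)
  have ad: "br (br a c) w = br a (br c w) - br c (br a w)" for a c w
  proof -
    have "br a (br c w) + br c (br w a) + br w (br a c) = 0" using lie_jacobi[OF L] .
    moreover have "br w (br a c) = - br (br a c) w" using lie_anti[OF L] .
    moreover have "br w a = - br a w" using lie_anti[OF L] .
    ultimately show ?thesis using b by (simp add: bilinear_rneg algebra_simps)
  qed
  have "killing br (br x y) z = ltrace (\<lambda>u. br x (br y (br z u))) - ltrace (\<lambda>u. br y (br x (br z u)))"
    unfolding killing_def ad by (rule ltrace_diff)
  moreover have "killing br x (br y z) = ltrace (\<lambda>u. br x (br y (br z u))) - ltrace (\<lambda>u. br x (br z (br y u)))"
    unfolding killing_def ad using b by (simp add: bilinear_rsub ltrace_diff)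
  moreover have "ltrace (\<lambda>u. br y (br x (br z u))) = ltrace (\<lambda>u. br x (br z (br y u)))"
    using ltrace_comm[of "br y" "\<lambda>u. br x (br z u)"] b
    by (simp add: bilinear_def linear_compose[unfolded o_def])
  ultimately show ?thesis by simp
qed

lemma repr_vec:
  assumes "linear (\<lambda>y. F z y)"
  shows "inner (\<Sum>b\<in>Basis. F z b *\<^sub>R b) y = F z y"
proof -
  have "F z y = F z (\<Sum>b\<in>Basis. inner y b *\<^sub>R b)" by (simp add: euclidean_representation)
  also have "\<dots> = (\<Sum>b\<in>Basis. inner y b * F z b)"
    using assms by (simp add: linear_sum linear_scale)
  also have "\<dots> = (\<Sum>b\<in>Basis. F z b * inner b y)" by (simp add: inner_commute mult.commute)
  finally show ?thesis by (simp only: inner_sum_left inner_scaleR_left)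
qed

lemma proj_exists:
  fixes F :: "'a::euclidean_space \<Rightarrow> 'a \<Rightarrow> real"
  assumes F: "bilinear F" and U: "subspace U" and nd: "\<forall>u\<in>U. u \<noteq> 0 \<longrightarrow> F u u \<noteq> 0"
  shows "\<exists>w\<in>U. \<forall>z\<in>U. F z (x - w) = 0"
proof -
  define N where "N z = (\<Sum>b\<in>Basis. F z b *\<^sub>R b)" for z
  have iN: "inner (N z) y = F z y" for z y
    unfolding N_def by (rule repr_vec) (use F in \<open>simp add: bilinear_def\<close>)
  have linN: "linear N"
  proof (rule linearI)
    fix a b show "N (a + b) = N a + N b"
      unfolding N_def by (simp add: bilinear_ladd[OF F] scaleR_add_left sum.distrib)
  next
    fix c a show "N (c *\<^sub>R a) = c *\<^sub>R N a"
      unfolding N_def by (simp add: bilinear_lmul[OF F] scaleR_sum_right)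
  qed
  define V where "V = {y. \<forall>z\<in>U. F z y = 0}"
  have V_eq: "V = {y \<in> UNIV. \<forall>a \<in> N ` U. orthogonal a y}"
    unfolding V_def orthogonal_def by (auto simp: iN)
  have sNU: "subspace (N ` U)" using linN U by (rule linear_subspace_image)
  have "dim {y \<in> UNIV. \<forall>a \<in> N ` U. orthogonal a y} + dim (N ` U) = dim (UNIV::'a set)"
    by (rule dim_subspace_orthogonal_to_vectors) (use sNU in auto)
  hence dV: "dim V + dim (N ` U) = DIM('a)" unfolding V_eq by (simp add: dim_UNIV)
  have "dim (N ` U) \<le> dim U" using linN by (rule dim_image_le)
  have sV: "subspace V"
    unfolding V_def subspace_def
    by (auto simp: bilinear_radd[OF F] bilinear_rmul[OF F] bilinear_rzero[OF F])
  have int0: "U \<inter> V = {0}"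
  proof -
    have "u = 0" if "u \<in> U" "u \<in> V" for u using that nd unfolding V_def by auto
    moreover have "0 \<in> U \<inter> V" using U sV by (simp add: subspace_0)
    ultimately show ?thesis by auto
  qed
  define W where "W = {a + b |a b. a \<in> U \<and> b \<in> V}"
  have "dim W + dim (U \<inter> V) = dim U + dim V"
    unfolding W_def by (rule dim_sums_Int[OF U sV])
  hence "dim W \<ge> DIM('a)"
    using int0 dV \<open>dim (N ` U) \<le> dim U\<close> by simp
  moreover have "dim W \<le> DIM('a)" using dim_subset_UNIV[of W] by (simp add: dim_UNIV)
  ultimately have "dim W = DIM('a)" by simp
  hence "span W = UNIV" by (simp add: dim_eq_full)
  moreover have "subspace W" unfolding W_def using U sV by (rule subspace_sums)
  ultimately have "x \<in> W" using span_eq_iff[of W] by simp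
  then obtain a b where ab: "a \<in> U" "b \<in> V" "x = a + b" unfolding W_def by auto
  show ?thesis using ab unfolding V_def by (intro bexI[of _ a]) auto
qed

lemma proj_unique:
  fixes F :: "'a::euclidean_space \<Rightarrow> 'a \<Rightarrow> real"
  assumes F: "bilinear F" and U: "subspace U" and nd: "\<forall>u\<in>U. u \<noteq> 0 \<longrightarrow> F u u \<noteq> 0"
    and w1: "w1 \<in> U" "\<forall>z\<in>U. F z (x - w1) = 0"
    and w2: "w2 \<in> U" "\<forall>z\<in>U. F z (x - w2) = 0"
  shows "w1 = w2"
proof -
  have d: "w2 - w1 \<in> U" using U w1 w2 by (simp add: subspace_diff)
  have "F (w2 - w1) (w2 - w1) = F (w2 - w1) (x - w1) - F (w2 - w1) (x - w2)"
    using F by (simp add: bilinear_rsub)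
  also have "\<dots> = 0" using d w1 w2 by simp
  finally show ?thesis using nd d by auto
qed

definition gproj :: "('a::euclidean_space \<Rightarrow> 'a \<Rightarrow> real) \<Rightarrow> 'a set \<Rightarrow> 'a \<Rightarrow> 'a" where
  "gproj F U x = (THE w. w \<in> U \<and> (\<forall>z\<in>U. F z (x - w) = 0))"

lemma gproj:
  fixes F :: "'a::euclidean_space \<Rightarrow> 'a \<Rightarrow> real"
  assumes F: "bilinear F" and U: "subspace U" and nd: "\<forall>u\<in>U. u \<noteq> 0 \<longrightarrow> F u u \<noteq> 0"
  shows "gproj F U x \<in> U \<and> (\<forall>z\<in>U. F z (x - gproj F U x) = 0)"
proof -
  obtain w where "w \<in> U" "\<forall>z\<in>U. F z (x - w) = 0" using proj_exists[OF assms] by blast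
  hence "\<exists>!w. w \<in> U \<and> (\<forall>z\<in>U. F z (x - w) = 0)" using proj_unique[OF assms] by blast
  thus ?thesis unfolding gproj_def by (rule theI')
qed

lemma gproj_eq:
  fixes F :: "'a::euclidean_space \<Rightarrow> 'a \<Rightarrow> real"
  assumes F: "bilinear F" and U: "subspace U" and nd: "\<forall>u\<in>U. u \<noteq> 0 \<longrightarrow> F u u \<noteq> 0"
    and "w \<in> U" "\<forall>z\<in>U. F z (x - w) = 0"
  shows "gproj F U x = w"
  using proj_unique[OF F U nd, of "gproj F U x" x w] gproj[OF F U nd, of x] assms(4,5) by blast

lemma gproj_linear:
  fixes F :: "'a::euclidean_space \<Rightarrow> 'a \<Rightarrow> real"
  assumes F: "bilinear F" and U: "subspace U" and nd: "\<forall>u\<in>U. u \<noteq> 0 \<longrightarrow> F u u \<noteq> 0"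
  shows "linear (gproj F U)"
proof (rule linearI)
  fix x y
  show "gproj F U (x + y) = gproj F U x + gproj F U y"
  proof (rule gproj_eq[OF F U nd])
    show "gproj F U x + gproj F U y \<in> U" using gproj[OF F U nd] U by (simp add: subspace_add)
    show "\<forall>z\<in>U. F z (x + y - (gproj F U x + gproj F U y)) = 0"
    proof
      fix z assume z: "z \<in> U"
      have eq: "x + y - (gproj F U x + gproj F U y) = (x - gproj F U x) + (y - gproj F U y)" by simp
      show "F z (x + y - (gproj F U x + gproj F U y)) = 0"
        unfolding eq bilinear_radd[OF F]
        using gproj[OF F U nd, of x] gproj[OF F U nd, of y] z by simp
    qed
  qed
next
  fix c x
  show "gproj F U (c *\<^sub>R x) = c *\<^sub>R gproj F U x"
  proof (rule gproj_eq[OF F U nd])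
    show "c *\<^sub>R gproj F U x \<in> U" using gproj[OF F U nd] U by (simp add: subspace_scale)
    show "\<forall>z\<in>U. F z (c *\<^sub>R x - c *\<^sub>R gproj F U x) = 0"
    proof
      fix z assume z: "z \<in> U"
      have "c *\<^sub>R x - c *\<^sub>R gproj F U x = c *\<^sub>R (x - gproj F U x)" by (simp add: scaleR_diff_right)
      thus "F z (c *\<^sub>R x - c *\<^sub>R gproj F U x) = 0"
        using gproj[OF F U nd, of x] z F by (simp add: bilinear_rmul)
    qed
  qed
qed

lemma riesz:
  fixes g :: "'a::euclidean_space \<Rightarrow> 'a \<Rightarrow> real"
  assumes g: "bilinear g" and nd: "\<forall>v. g v v = 0 \<longrightarrow> v = 0" and phi: "linear phi"
  shows "\<exists>!v. \<forall>Z. g v Z = phi Z"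
proof -
  define G where "G v = (\<Sum>b\<in>Basis. g v b *\<^sub>R b)" for v
  have iG: "inner (G v) y = g v y" for v y
    unfolding G_def by (rule repr_vec) (use g in \<open>simp add: bilinear_def\<close>)
  have linG: "linear G"
    unfolding G_def by (rule linearI) (use g in \<open>simp_all add: bilinear_ladd bilinear_lmul scaleR_add_left sum.distrib scaleR_sum_right\<close>)
  have injG: "inj G"
  proof (rule injI)
    fix a b
    assume ab: "G a = G b"
    have "g a y = g b y" for y using iG[of a y] iG[of b y] ab by simp
    hence "g a (a - b) - g b (a - b) = 0" by simp
    hence "g (a - b) (a - b) = 0" using bilinear_lsub[OF g, of a b "a - b"] by simp
    thus "a = b" using nd[rule_format, of "a - b"] by simp
  qed
  have "surj G" using linear_injective_imp_surjective[OF linG injG] by simp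
  define w where "w = (\<Sum>b\<in>Basis. phi b *\<^sub>R b)"
  have iw: "inner w Z = phi Z" for Z
    unfolding w_def using repr_vec[of "\<lambda>_ y. phi y" undefined Z] phi by simp
  obtain v where "G v = w" using \<open>surj G\<close> by (metis surjD)
  hence ex: "\<forall>Z. g v Z = phi Z" using iG iw by auto
  show ?thesis
  proof (rule ex1I[of _ v])
    show "\<forall>Z. g v Z = phi Z" by (rule ex)
    fix v' assume "\<forall>Z. g v' Z = phi Z"
    hence "g v' (v' - v) - g v (v' - v) = 0" using ex by simp
    hence "g (v' - v) (v' - v) = 0" using bilinear_lsub[OF g, of v' v "v' - v"] by simp
    thus "v' = v" using nd[rule_format, of "v' - v"] by simp
  qed
qed

lemma bilinear_swap: "bilinear F \<Longrightarrow> bilinear (\<lambda>x y. F y x)"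
  by (simp add: bilinear_def)

locale cartan_setting =
  fixes br :: "'a::euclidean_space \<Rightarrow> 'a \<Rightarrow> 'a" and K :: "'a set"
  assumes lie: "lie_algebra br" and cart: "cartan_subalgebra_k br K"
begin

lemma brb: "bilinear br" using lie by (simp add: lie_algebra_def)
lemma kb: "bilinear (killing br)" using killing_bilinear[OF brb] .
lemma ksym: "killing br x y = killing br y x" using killing_sym[OF brb] .
lemma kinv: "killing br (br x y) z = killing br x (br y z)" using killing_invariant[OF lie] .
lemma anti: "br y x = - br x y" using lie_anti[OF lie] .
lemma jac: "br x (br y z) + br y (br z x) + br z (br x y) = 0" using lie_jacobi[OF lie] .

lemma sK: "subspace K" using cart by (simp add: cartan_subalgebra_k_def lie_subalgebra_def)
lemma brK: "x \<in> K \<Longrightarrow> y \<in> K \<Longrightarrow> br x y \<in> K"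
  using cart by (simp add: cartan_subalgebra_k_def lie_subalgebra_def)
lemma negK: "x \<in> K \<Longrightarrow> x \<noteq> 0 \<Longrightarrow> killing br x x < 0"
  using cart by (simp add: cartan_subalgebra_k_def)
lemma posP: "y \<in> B_orth br K \<Longrightarrow> y \<noteq> 0 \<Longrightarrow> killing br y y > 0"
  using cart by (simp add: cartan_subalgebra_k_def)

lemma sP: "subspace (B_orth br K)"
  unfolding B_orth_def subspace_def
  by (auto simp: bilinear_radd[OF kb] bilinear_rmul[OF kb] bilinear_rzero[OF kb])

lemma ndK: "\<forall>u\<in>K. u \<noteq> 0 \<longrightarrow> killing br u u \<noteq> 0" using negK by force

lemma ndsub: "U \<subseteq> K \<Longrightarrow> \<forall>u\<in>U. u \<noteq> 0 \<longrightarrow> killing br u u \<noteq> 0" using negK by force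

lemma kproj_eq: "kproj br K = gproj (killing br) K"
  unfolding kproj_def gproj_def B_orth_def by (rule ext) simp

lemma kproj: "kproj br K x \<in> K" "x - kproj br K x \<in> B_orth br K"
  using gproj[OF kb sK ndK, of x] unfolding kproj_eq B_orth_def by auto

lemma kproj_lin: "linear (kproj br K)"
  unfolding kproj_eq by (rule gproj_linear[OF kb sK ndK])

lemma Q_eq: "cartanQ br K x y = killing br (x - kproj br K x) (y - kproj br K y)
                      - killing br (kproj br K x) (kproj br K y)"
  by (simp add: cartanQ_def)

lemma lin_diff_id: "linear f \<Longrightarrow> linear (\<lambda>x. x - f x)"
  by (simp add: linear_compose_sub linear_id[unfolded id_def])

lemma bil_comp: "bilinear F \<Longrightarrow> linear f \<Longrightarrow> linear h \<Longrightarrow> bilinear (\<lambda>x y. F (f x) (h y))"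
  unfolding bilinear_def
  by (auto intro: linear_compose[unfolded o_def])

lemma bil_sub: "bilinear F \<Longrightarrow> bilinear G \<Longrightarrow> bilinear (\<lambda>x y. F x y - G x y)"
  unfolding bilinear_def by (auto intro: linear_compose_sub)

lemma Qb: "bilinear (cartanQ br K)"
proof -
  have l: "linear (\<lambda>x. x - kproj br K x)" by (rule lin_diff_id[OF kproj_lin])
  have "bilinear (\<lambda>x y. killing br (x - kproj br K x) (y - kproj br K y)
                      - killing br (kproj br K x) (kproj br K y))"
    by (rule bil_sub; rule bil_comp[OF kb]) (use l kproj_lin in auto)
  thus ?thesis unfolding cartanQ_def[abs_def] by simp
qed

lemma Qsym: "cartanQ br K x y = cartanQ br K y x"
  unfolding cartanQ_def using ksym by simp

lemma Qpos: "x \<noteq> 0 \<Longrightarrow> cartanQ br K x x > 0"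
proof -
  assume x: "x \<noteq> 0"
  let ?k = "kproj br K x" and ?p = "x - kproj br K x"
  have k: "?k \<in> K" and p: "?p \<in> B_orth br K" using kproj by auto
  have a: "killing br ?p ?p \<ge> 0" using posP[OF p] by (cases "?p = 0") (auto simp: bilinear_lzero[OF kb] less_imp_le)
  have b: "killing br ?k ?k \<le> 0" using negK[OF k] by (cases "?k = 0") (auto simp: bilinear_lzero[OF kb] less_imp_le)
  have "?p \<noteq> 0 \<or> ?k \<noteq> 0" using x by auto
  hence "killing br ?p ?p > 0 \<or> killing br ?k ?k < 0" using posP[OF p] negK[OF k] by blast
  thus ?thesis using a b unfolding cartanQ_def by auto
qed

lemma Qnd: "\<forall>u\<in>U. u \<noteq> 0 \<longrightarrow> (\<lambda>z y. cartanQ br K y z) u u \<noteq> 0"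
  using Qpos by (metis less_irrefl)

lemma Qbs: "bilinear (\<lambda>z y. cartanQ br K y z)" by (rule bilinear_swap[OF Qb])

lemma qproj_eq: "qproj br K U = gproj (\<lambda>z y. cartanQ br K y z) U"
  unfolding qproj_def gproj_def by (rule ext) simp

lemma qproj: "subspace U \<Longrightarrow> qproj br K U x \<in> U \<and> (\<forall>z\<in>U. cartanQ br K (x - qproj br K U x) z = 0)"
  unfolding qproj_eq using gproj[OF Qbs _ Qnd, of U x] by simp

lemma qproj_lin: "subspace U \<Longrightarrow> linear (qproj br K U)"
  unfolding qproj_eq by (rule gproj_linear[OF Qbs _ Qnd])

lemma Qrestr_b: "subspace U \<Longrightarrow> bilinear (Qrestr br K U)"
  unfolding Qrestr_def[abs_def] by (rule bil_comp[OF Qb]; rule qproj_lin)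

lemma Qrestr_sym: "Qrestr br K U x y = Qrestr br K U y x"
  unfolding Qrestr_def by (rule Qsym)

end

context cartan_setting
begin

abbreviation "ideal I \<equiv> lie_ideal_in br K I"
definition perp :: "'a set \<Rightarrow> 'a set" where
  "perp I = {y\<in>K. \<forall>x\<in>I. killing br x y = 0}"

lemma ideal_D: assumes "ideal I" shows "subspace I" "I \<subseteq> K" "\<And>x y. x \<in> K \<Longrightarrow> y \<in> I \<Longrightarrow> br x y \<in> I"
  using assms by (auto simp: lie_ideal_in_def)

lemma ideal_r: assumes "ideal I" "x \<in> K" "y \<in> I" shows "br y x \<in> I"
proof -
  have "br x y \<in> I" using ideal_D(3)[OF assms(1,2,3)] .
  hence "- br x y \<in> I" using subspace_neg[OF ideal_D(1)[OF assms(1)]] by blast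
  thus ?thesis using anti[of x y] by simp
qed

lemma brlin: "linear (br x)" using brb by (simp add: bilinear_def)
lemma brlinl: "linear (\<lambda>x. br x y)" using brb by (simp add: bilinear_def)

lemma perp_ideal: assumes I: "ideal I" shows "ideal (perp I)"
  unfolding lie_ideal_in_def
proof (intro conjI ballI)
  show "subspace (perp I)"
    unfolding perp_def subspace_def
    using sK by (auto simp: bilinear_radd[OF kb] bilinear_rmul[OF kb] bilinear_rzero[OF kb]
        subspace_0 subspace_add subspace_scale)
  show "perp I \<subseteq> K" unfolding perp_def by auto
  fix k y assume k: "k \<in> K" and y: "y \<in> perp I"
  have yK: "y \<in> K" using y unfolding perp_def by auto
  have "killing br x (br k y) = 0" if x: "x \<in> I" for x
  proof -
    have "killing br x (br k y) = killing br (br x k) y" using kinv[of x k y] by simp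
    moreover have "br x k \<in> I" using ideal_r[OF I k x] .
    ultimately show ?thesis using y unfolding perp_def by auto
  qed
  thus "br k y \<in> perp I" unfolding perp_def using brK[OF k yK] by auto
qed

lemma decomp: assumes I: "ideal I" and k: "k \<in> K" shows "\<exists>w\<in>I. k - w \<in> perp I"
proof -
  obtain w where w: "w \<in> I" "\<forall>z\<in>I. killing br z (k - w) = 0"
    using proj_exists[OF kb ideal_D(1)[OF I] ndsub[OF ideal_D(2)[OF I]]] by blast
  have "k - w \<in> K" using sK k w(1) ideal_D(2)[OF I] by (auto intro: subspace_diff)
  thus ?thesis using w unfolding perp_def by auto
qed

lemma int_perp: assumes "v \<in> I" "v \<in> perp I" shows "v = 0"
proof -
  have "killing br v v = 0" using assms unfolding perp_def by auto
  moreover have "v \<in> K" using assms unfolding perp_def by auto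
  ultimately show ?thesis using negK by force
qed

lemma cross0: assumes I: "ideal I" and a: "a \<in> I" and b: "b \<in> perp I"
  shows "br a b = 0" "br b a = 0"
proof -
  have bK: "b \<in> K" using b unfolding perp_def by auto
  have aK: "a \<in> K" using a ideal_D(2)[OF I] by auto
  have "br a b \<in> I" using ideal_r[OF I bK a] .
  moreover have "br a b \<in> perp I" using ideal_D(3)[OF perp_ideal[OF I] aK b] .
  ultimately show "br a b = 0" by (rule int_perp)
  thus "br b a = 0" using anti[of a b] by simp
qed

lemma int_ideal: "ideal I \<Longrightarrow> ideal J \<Longrightarrow> ideal (I \<inter> J)"
  unfolding lie_ideal_in_def by (auto intro: subspace_inter)

lemma D_sub_K: "derived br K \<subseteq> K"
  unfolding derived_def by (rule span_minimal) (use brK sK in auto)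

lemma sZ: "subspace (lie_centre br K)"
  unfolding lie_centre_def subspace_def
  using sK by (auto simp: subspace_0 subspace_add subspace_scale linear_add[OF brlin] linear_scale[OF brlin] linear_0[OF brlin])

lemma nonzero_ex: "subspace J \<Longrightarrow> J \<noteq> {0} \<Longrightarrow> \<exists>j\<in>J. j \<noteq> 0"
  using subspace_0 by blast

lemma minimal_class:
  assumes J: "ideal J" and nz: "J \<noteq> {0}"
    and mini: "\<And>J0. ideal J0 \<Longrightarrow> J0 \<subseteq> J \<Longrightarrow> J0 = {0} \<or> J0 = J"
  shows "J \<subseteq> lie_centre br K \<or> simple_ideal br (derived br K) J"
proof (cases "\<forall>a\<in>J. \<forall>b\<in>J. br a b = 0")
  case True
  have "z \<in> lie_centre br K" if z: "z \<in> J" for z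
  proof -
    have zK: "z \<in> K" using z ideal_D(2)[OF J] by auto
    have "br x z = 0" if x: "x \<in> K" for x
    proof -
      obtain w where w: "w \<in> J" "x - w \<in> perp J" using decomp[OF J x] by blast
      have "br x z = br w z + br (x - w) z" using linear_add[OF brlinl, of w "x - w" z] by simp
      thus ?thesis using True w z cross0(2)[OF J z w(2)] by simp
    qed
    thus ?thesis unfolding lie_centre_def using zK by auto
  qed
  thus ?thesis by auto
next
  case False
  then obtain a b where ab: "a \<in> J" "b \<in> J" "br a b \<noteq> 0" by blast
  have JK: "J \<subseteq> K" by (rule ideal_D(2)[OF J])
  define J2 where "J2 = span {br x y | x y. x \<in> J \<and> y \<in> J}"
  have J2J: "J2 \<subseteq> J"
    unfolding J2_def by (rule span_minimal) (use ideal_D[OF J] JK in auto)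
  have J2i: "ideal J2"
    unfolding lie_ideal_in_def
  proof (intro conjI ballI)
    show "subspace J2" unfolding J2_def by (rule subspace_span)
    show "J2 \<subseteq> K" using J2J JK by auto
    fix k y assume k: "k \<in> K" and y: "y \<in> J2"
    have "br k ` {br x y | x y. x \<in> J \<and> y \<in> J} \<subseteq> J2"
    proof
      fix v assume "v \<in> br k ` {br x y | x y. x \<in> J \<and> y \<in> J}"
      then obtain x y where xy: "x \<in> J" "y \<in> J" "v = br k (br x y)" by auto
      have e: "br k (br x y) = - (br x (br y k) + br y (br k x))" using jac[of k x y]
        unfolding eq_neg_iff_add_eq_0 by (simp only: add.assoc)
      have "br y k \<in> J" using ideal_r[OF J k xy(2)] .
      hence m1: "br x (br y k) \<in> J2" unfolding J2_def using xy by (auto intro: span_base)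
      have "br k x \<in> J" using ideal_D(3)[OF J k xy(1)] .
      hence m2: "br y (br k x) \<in> J2" unfolding J2_def using xy by (auto intro: span_base)
      show "v \<in> J2" unfolding xy(3) e J2_def
        by (rule span_neg, rule span_add) (use m1 m2 J2_def in auto)
    qed
    hence "span (br k ` {br x y | x y. x \<in> J \<and> y \<in> J}) \<subseteq> J2"
      unfolding J2_def by (rule span_minimal[OF _ subspace_span])
    hence "br k ` J2 \<subseteq> J2" unfolding J2_def linear_span_image[OF brlin] .
    thus "br k y \<in> J2" using y by auto
  qed
  have "br a b \<in> J2" unfolding J2_def using ab by (auto intro: span_base)
  hence "J2 \<noteq> {0}" using ab by auto
  hence J2eq: "J2 = J" using mini[OF J2i J2J] by auto
  have "J2 \<subseteq> derived br K"
    unfolding J2_def derived_def by (rule span_mono) (use JK in blast)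
  hence JD: "J \<subseteq> derived br K" using J2eq by simp
  have "simple_ideal br (derived br K) J"
    unfolding simple_ideal_def
  proof (intro conjI allI impI)
    show "lie_ideal_in br (derived br K) J"
      unfolding lie_ideal_in_def using ideal_D[OF J] JD D_sub_K by auto
    show "\<exists>x\<in>J. \<exists>y\<in>J. br x y \<noteq> 0" using ab by auto
    fix J0 assume J0: "lie_ideal_in br J J0"
    have "ideal J0"
      unfolding lie_ideal_in_def
    proof (intro conjI ballI)
      show "subspace J0" using J0 by (simp add: lie_ideal_in_def)
      show "J0 \<subseteq> K" using J0 JK by (auto simp: lie_ideal_in_def)
      fix k y assume k: "k \<in> K" and y: "y \<in> J0"
      have yJ: "y \<in> J" using J0 y by (auto simp: lie_ideal_in_def)
      obtain w where w: "w \<in> J" "k - w \<in> perp J" using decomp[OF J k] by blast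
      have "br k y = br w y + br (k - w) y" using linear_add[OF brlinl, of w "k - w" y] by simp
      also have "br (k - w) y = 0" using cross0(2)[OF J yJ w(2)] .
      finally have "br k y = br w y" by simp
      thus "br k y \<in> J0" using J0 w(1) y by (auto simp: lie_ideal_in_def)
    qed
    moreover have "J0 \<subseteq> J" using J0 by (simp add: lie_ideal_in_def)
    ultimately show "J0 = {0} \<or> J0 = J" using mini by blast
  qed
  thus ?thesis by auto
qed

abbreviation "SI \<equiv> {J. simple_ideal br (derived br K) J}"

lemma ideal_span: "ideal I \<Longrightarrow> I \<subseteq> span (lie_centre br K \<union> \<Union>SI)"
proof (induction "dim I" arbitrary: I rule: less_induct)
  case less
  note I = less.prems
  show ?case
  proof (cases "I = {0}")
    case True thus ?thesis by (auto simp: span_zero)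
  next
    case False
    define M where "M = {J. ideal J \<and> J \<subseteq> I \<and> J \<noteq> {0}}"
    have IM: "I \<in> M" using I False unfolding M_def by auto
    define m where "m = (LEAST n. \<exists>J\<in>M. dim J = n)"
    have "\<exists>J\<in>M. dim J = m" unfolding m_def by (rule LeastI_ex) (use IM in blast)
    then obtain J where JM: "J \<in> M" and dJ: "dim J = m" by blast
    have mle: "m \<le> dim J'" if "J' \<in> M" for J' unfolding m_def by (rule Least_le) (use that in blast)
    have J: "ideal J" and JI: "J \<subseteq> I" and Jnz: "J \<noteq> {0}" using JM unfolding M_def by auto
    have mini: "J0 = {0} \<or> J0 = J" if J0: "ideal J0" "J0 \<subseteq> J" for J0
    proof (cases "J0 = {0}")
      case False
      hence "J0 \<in> M" using J0 JI unfolding M_def by auto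
      hence "dim J \<le> dim J0" using mle dJ by auto
      hence "J0 = J" using subspace_dim_equal[OF ideal_D(1)[OF J0(1)] ideal_D(1)[OF J] J0(2)] by simp
      thus ?thesis by simp
    qed simp
    have "J \<subseteq> lie_centre br K \<union> \<Union>SI" using minimal_class[OF J Jnz mini] by blast
    hence Jspan: "J \<subseteq> span (lie_centre br K \<union> \<Union>SI)"
      by (rule subset_trans[OF _ span_superset])
    define I2 where "I2 = I \<inter> perp J"
    have I2i: "ideal I2" unfolding I2_def by (rule int_ideal[OF I perp_ideal[OF J]])
    obtain j where j: "j \<in> J" "j \<noteq> 0" using nonzero_ex[OF ideal_D(1)[OF J] Jnz] by blast
    have "j \<notin> I2" using int_perp[of j J] j unfolding I2_def by auto
    hence "I2 \<noteq> I" using j JI by auto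
    moreover have "I2 \<subseteq> I" unfolding I2_def by auto
    ultimately have "\<not> dim I \<le> dim I2"
    proof (intro notI)
      assume "I2 \<noteq> I" "I2 \<subseteq> I" "dim I \<le> dim I2"
      hence "I2 = I" using subspace_dim_equal[OF ideal_D(1)[OF I2i] ideal_D(1)[OF I]] by blast
      thus False using \<open>I2 \<noteq> I\<close> by blast
    qed
    hence "dim I2 < dim I" by simp
    hence I2span: "I2 \<subseteq> span (lie_centre br K \<union> \<Union>SI)" by (rule less.hyps[OF _ I2i])
    show ?thesis
    proof
      fix x assume x: "x \<in> I"
      have xK: "x \<in> K" using x ideal_D(2)[OF I] by auto
      obtain w where w: "w \<in> J" "x - w \<in> perp J" using decomp[OF J xK] by blast
      have "x - w \<in> I" using x w(1) JI ideal_D(1)[OF I] by (auto intro: subspace_diff)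
      hence "x - w \<in> I2" using w unfolding I2_def by auto
      hence "w + (x - w) \<in> span (lie_centre br K \<union> \<Union>SI)"
        using subsetD[OF I2span] subsetD[OF Jspan w(1)] by (blast intro: span_add)
      thus "x \<in> span (lie_centre br K \<union> \<Union>SI)" by simp
    qed
  qed
qed

lemma K_span: "K \<subseteq> span (lie_centre br K \<union> \<Union>SI)"
proof (rule ideal_span)
  show "ideal K" unfolding lie_ideal_in_def using sK brK by auto
qed

end

lemma orth_indep:
  fixes F :: "'a::euclidean_space \<Rightarrow> 'a \<Rightarrow> real"
  assumes F: "bilinear F" and nz: "\<forall>v\<in>V. F v v \<noteq> 0"
    and orth: "\<forall>v\<in>V. \<forall>w\<in>V. v \<noteq> w \<longrightarrow> F v w = 0"
  shows "independent V"
  unfolding independent_explicit_module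
proof (intro allI impI)
  fix t u v assume t: "finite t" "t \<subseteq> V" and s: "(\<Sum>v\<in>t. u v *\<^sub>R v) = 0" and v: "v \<in> t"
  have lin: "linear (F v)" using F by (simp add: bilinear_def)
  have "0 = F v (\<Sum>x\<in>t. u x *\<^sub>R x)" unfolding s by (rule bilinear_rzero[OF F, symmetric])
  also have "\<dots> = (\<Sum>x\<in>t. u x * F v x)" by (simp add: linear_sum[OF lin] linear_scale[OF lin])
  also have "\<dots> = u v * F v v + (\<Sum>x\<in>t - {v}. u x * F v x)"
    by (rule sum.remove[OF t(1) v])
  also have "(\<Sum>x\<in>t - {v}. u x * F v x) = 0"
  proof (rule sum.neutral, rule ballI)
    fix x assume x: "x \<in> t - {v}"
    have "v \<in> V" "x \<in> V" "v \<noteq> x" using t v x by auto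
    hence "F v x = 0" using orth by simp
    thus "u x * F v x = 0" by simp
  qed
  finally have "u v * F v v = 0" by simp
  moreover have "F v v \<noteq> 0" using nz v t by auto
  ultimately show "u v = 0" by simp
qed

context cartan_setting
begin

lemma SI_D: assumes "J \<in> SI"
  shows "subspace J" "J \<subseteq> derived br K" "J \<subseteq> K" "\<And>x y. x \<in> derived br K \<Longrightarrow> y \<in> J \<Longrightarrow> br x y \<in> J"
    "\<exists>x\<in>J. \<exists>y\<in>J. br x y \<noteq> 0" "\<And>J0. lie_ideal_in br J J0 \<Longrightarrow> J0 = {0} \<or> J0 = J"
  using assms D_sub_K by (auto simp: simple_ideal_def lie_ideal_in_def)

lemma SI_perfect: assumes J: "J \<in> SI"
  shows "J \<subseteq> span {br x y | x y. x \<in> J \<and> y \<in> J}"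
proof -
  define J3 where "J3 = span {br x y | x y. x \<in> J \<and> y \<in> J}"
  have J3J: "J3 \<subseteq> J"
    unfolding J3_def by (rule span_minimal) (use SI_D[OF J] in blast)+
  have "lie_ideal_in br J J3"
    unfolding lie_ideal_in_def
  proof (intro conjI ballI)
    show "subspace J3" unfolding J3_def by (rule subspace_span)
    show "J3 \<subseteq> J" by (rule J3J)
    fix x y assume x: "x \<in> J" and y: "y \<in> J3"
    have "br x ` {br x y | x y. x \<in> J \<and> y \<in> J} \<subseteq> {br x y | x y. x \<in> J \<and> y \<in> J}"
    proof
      fix v assume "v \<in> br x ` {br x y | x y. x \<in> J \<and> y \<in> J}"
      then obtain a b where ab: "a \<in> J" "b \<in> J" "v = br x (br a b)" by auto
      have "br a b \<in> J" using SI_D(4)[OF J] SI_D(2)[OF J] ab by blast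
      thus "v \<in> {br x y | x y. x \<in> J \<and> y \<in> J}" using ab x by blast
    qed
    hence "span (br x ` {br x y | x y. x \<in> J \<and> y \<in> J}) \<subseteq> J3"
      unfolding J3_def by (rule span_mono)
    hence "br x ` J3 \<subseteq> J3" unfolding J3_def linear_span_image[OF brlin] .
    thus "br x y \<in> J3" using y by auto
  qed
  hence "J3 = {0} \<or> J3 = J" by (rule SI_D(6)[OF J])
  moreover obtain a b where "a \<in> J" "b \<in> J" "br a b \<noteq> 0" using SI_D(5)[OF J] by blast
  hence "br a b \<in> J3" "br a b \<noteq> 0" unfolding J3_def by (auto intro: span_base)
  ultimately have "J3 = J" by auto
  thus ?thesis unfolding J3_def by simp
qed

lemma SI_disj: assumes J1: "J1 \<in> SI" and J2: "J2 \<in> SI" and ne: "J1 \<noteq> J2"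
  shows "J1 \<inter> J2 = {0}"
proof -
  have "lie_ideal_in br J1 (J1 \<inter> J2)"
    unfolding lie_ideal_in_def
    using SI_D[OF J1] SI_D[OF J2] by (auto intro: subspace_inter)
  hence c: "J1 \<inter> J2 = {0} \<or> J1 \<inter> J2 = J1" by (rule SI_D(6)[OF J1])
  show ?thesis
  proof (cases "J1 \<inter> J2 = {0}")
    case False
    hence sub: "J1 \<subseteq> J2" using c by auto
    have "lie_ideal_in br J2 J1"
      unfolding lie_ideal_in_def using sub SI_D[OF J1] SI_D(2)[OF J2] by blast
    hence "J1 = {0} \<or> J1 = J2" by (rule SI_D(6)[OF J2])
    moreover have "J1 \<noteq> {0}" using SI_D(5)[OF J1] bilinear_lzero[OF brb] by auto
    ultimately show ?thesis using ne by auto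
  qed simp
qed

lemma SI_br0: assumes J1: "J1 \<in> SI" and J2: "J2 \<in> SI" and ne: "J1 \<noteq> J2"
  and a: "a \<in> J1" and b: "b \<in> J2" shows "br a b = 0"
proof -
  have "br b a \<in> J1" using SI_D(4)[OF J1] SI_D(2)[OF J2] a b by blast
  hence "- br b a \<in> J1" using subspace_neg[OF SI_D(1)[OF J1]] by blast
  hence "br a b \<in> J1" using anti[of b a] by simp
  moreover have "br a b \<in> J2" using SI_D(4)[OF J2] SI_D(2)[OF J1] a b by blast
  ultimately show ?thesis using SI_disj[OF J1 J2 ne] by blast
qed

lemma SI_orth: assumes J1: "J1 \<in> SI" and J2: "J2 \<in> SI" and ne: "J1 \<noteq> J2"
  and a: "a \<in> J1" and b: "b \<in> J2" shows "killing br a b = 0"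
proof -
  have "{br x y | x y. x \<in> J1 \<and> y \<in> J1} \<subseteq> {a. killing br a b = 0}"
  proof
    fix v assume "v \<in> {br x y | x y. x \<in> J1 \<and> y \<in> J1}"
    then obtain x y where xy: "x \<in> J1" "y \<in> J1" "v = br x y" by auto
    have "killing br (br x y) b = killing br x (br y b)" by (rule kinv)
    also have "br y b = 0" using SI_br0[OF J1 J2 ne xy(2) b] .
    finally show "v \<in> {a. killing br a b = 0}" using xy bilinear_rzero[OF kb] by simp
  qed
  moreover have "subspace {a. killing br a b = 0}"
    unfolding subspace_def by (auto simp: bilinear_ladd[OF kb] bilinear_lmul[OF kb] bilinear_lzero[OF kb])
  ultimately have "span {br x y | x y. x \<in> J1 \<and> y \<in> J1} \<subseteq> {a. killing br a b = 0}"
    by (rule span_minimal)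
  thus ?thesis using SI_perfect[OF J1] a by blast
qed

lemma SI_finite: "finite SI"
proof -
  define v where "v J = (SOME x. x \<in> J \<and> x \<noteq> (0::'a))" for J
  have v: "v J \<in> J \<and> v J \<noteq> 0" if J: "J \<in> SI" for J
  proof -
    obtain a b where ab: "a \<in> J" "b \<in> J" "br a b \<noteq> 0" using SI_D(5)[OF J] by blast
    have "a \<noteq> 0" using ab(3) bilinear_lzero[OF brb] by auto
    hence "\<exists>x. x \<in> J \<and> x \<noteq> 0" using ab(1) by blast
    thus ?thesis unfolding v_def by (rule someI_ex)
  qed
  have inj: "inj_on v SI"
  proof (rule inj_onI)
    fix J1 J2 assume J: "J1 \<in> SI" "J2 \<in> SI" "v J1 = v J2"
    show "J1 = J2"
    proof (rule ccontr)
      assume "J1 \<noteq> J2"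
      hence "J1 \<inter> J2 = {0}" using SI_disj J by blast
      moreover have "v J1 \<in> J1 \<inter> J2" using v[OF J(1)] v[OF J(2)] J(3) by simp
      ultimately show False using v[OF J(1)] by auto
    qed
  qed
  have "independent (v ` SI)"
  proof (rule orth_indep[OF kb])
    show "\<forall>x\<in>v ` SI. killing br x x \<noteq> 0"
    proof
      fix x assume "x \<in> v ` SI"
      then obtain J where J: "J \<in> SI" "x = v J" by blast
      have "x \<in> K" "x \<noteq> 0" using v[OF J(1)] SI_D(3)[OF J(1)] J(2) by auto
      thus "killing br x x \<noteq> 0" using negK by force
    qed
    show "\<forall>x\<in>v ` SI. \<forall>y\<in>v ` SI. x \<noteq> y \<longrightarrow> killing br x y = 0"
    proof (intro ballI impI)
      fix x y assume "x \<in> v ` SI" "y \<in> v ` SI" "x \<noteq> y"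
      then obtain J1 J2 where J: "J1 \<in> SI" "x = v J1" "J2 \<in> SI" "y = v J2" by blast
      have "J1 \<noteq> J2" using J \<open>x \<noteq> y\<close> by blast
      thus "killing br x y = 0" using SI_orth[OF J(1) J(3)] v[OF J(1)] v[OF J(3)] J by simp
    qed
  qed
  hence "finite (v ` SI)" using independent_bound by blast
  thus ?thesis using inj by (rule finite_imageD)
qed

end

context cartan_setting
begin

lemma kf_eq: "k_factors br K = SI \<union> (if lie_centre br K = {0} then {} else {lie_centre br K})"
  unfolding k_factors_def by simp

lemma idx_finite: "finite (index_spaces br K)"
  unfolding index_spaces_def kf_eq using SI_finite by simp

lemma idx_sub: "U \<in> index_spaces br K \<Longrightarrow> subspace U"
  unfolding index_spaces_def kf_eq using sP sZ SI_D(1) by (auto split: if_splits)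

lemma span_idx: "x \<in> span (\<Union>(index_spaces br K))"
proof -
  have Z: "lie_centre br K \<subseteq> span (\<Union>(index_spaces br K))"
  proof (cases "lie_centre br K = {0}")
    case True thus ?thesis using span_zero by auto
  next
    case False
    hence "lie_centre br K \<in> index_spaces br K" unfolding index_spaces_def kf_eq by simp
    hence "lie_centre br K \<subseteq> \<Union>(index_spaces br K)" by (rule Union_upper)
    thus ?thesis by (rule subset_trans[OF _ span_superset])
  qed
  have "SI \<subseteq> index_spaces br K" unfolding index_spaces_def kf_eq by blast
  hence "\<Union>SI \<subseteq> \<Union>(index_spaces br K)" by (rule Union_mono)
  hence S: "\<Union>SI \<subseteq> span (\<Union>(index_spaces br K))" by (rule subset_trans[OF _ span_superset])
  have "span (lie_centre br K \<union> \<Union>SI) \<subseteq> span (\<Union>(index_spaces br K))"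
    using Z S by (metis Un_least span_minimal subspace_span)
  hence k: "kproj br K x \<in> span (\<Union>(index_spaces br K))" using K_span kproj(1) by blast
  have "x - kproj br K x \<in> \<Union>(index_spaces br K)" using kproj(2) unfolding index_spaces_def by blast
  hence p: "x - kproj br K x \<in> span (\<Union>(index_spaces br K))" by (rule span_base)
  have "kproj br K x + (x - kproj br K x) \<in> span (\<Union>(index_spaces br K))" by (rule span_add[OF k p])
  thus ?thesis by simp
qed

lemma nr_bilinear: "bilinear (nr_metric br K c)"
proof -
  have b: "U \<in> index_spaces br K \<Longrightarrow> bilinear (Qrestr br K U)" for U using Qrestr_b idx_sub by blast
  show ?thesis
    unfolding bilinear_def nr_metric_def
  proof (intro conjI allI)
    fix x show "linear (\<lambda>y. \<Sum>U\<in>index_spaces br K. c U * Qrestr br K U x y)"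
    proof (rule linearI)
      fix y z show "(\<Sum>U\<in>index_spaces br K. c U * Qrestr br K U x (y + z)) =
        (\<Sum>U\<in>index_spaces br K. c U * Qrestr br K U x y) + (\<Sum>U\<in>index_spaces br K. c U * Qrestr br K U x z)"
        by (simp add: bilinear_radd[OF b] distrib_left sum.distrib cong: sum.cong)
    next
      fix r y show "(\<Sum>U\<in>index_spaces br K. c U * Qrestr br K U x (r *\<^sub>R y)) =
        r *\<^sub>R (\<Sum>U\<in>index_spaces br K. c U * Qrestr br K U x y)"
        by (simp add: bilinear_rmul[OF b] sum_distrib_left mult.left_commute cong: sum.cong)
    qed
  next
    fix y show "linear (\<lambda>x. \<Sum>U\<in>index_spaces br K. c U * Qrestr br K U x y)"
    proof (rule linearI)
      fix x z show "(\<Sum>U\<in>index_spaces br K. c U * Qrestr br K U (x + z) y) =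
        (\<Sum>U\<in>index_spaces br K. c U * Qrestr br K U x y) + (\<Sum>U\<in>index_spaces br K. c U * Qrestr br K U z y)"
        by (simp add: bilinear_ladd[OF b] distrib_left sum.distrib cong: sum.cong)
    next
      fix r x show "(\<Sum>U\<in>index_spaces br K. c U * Qrestr br K U (r *\<^sub>R x) y) =
        r *\<^sub>R (\<Sum>U\<in>index_spaces br K. c U * Qrestr br K U x y)"
        by (simp add: bilinear_lmul[OF b] sum_distrib_left mult.left_commute cong: sum.cong)
    qed
  qed
qed

lemma nr_sym: "nr_metric br K c x y = nr_metric br K c y x"
  unfolding nr_metric_def using Qrestr_sym by simp

lemma nr_nd:
  assumes MK: "in_MK br K c" and v0: "nr_metric br K c v v = 0"
  shows "v = 0"
proof -
  have cpos: "U \<in> index_spaces br K \<Longrightarrow> c U > 0" for U using MK by (simp add: in_MK_def)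
  have nn: "0 \<le> c U * Qrestr br K U v v" if U: "U \<in> index_spaces br K" for U
  proof -
    have "0 \<le> Qrestr br K U v v" unfolding Qrestr_def
      using Qpos[of "qproj br K U v"] by (cases "qproj br K U v = 0") (auto simp: bilinear_lzero[OF Qb])
    thus "0 \<le> c U * Qrestr br K U v v" using cpos[OF U] by simp
  qed
  have "\<forall>U\<in>index_spaces br K. c U * Qrestr br K U v v = 0"
    using v0 sum_nonneg_eq_0_iff[OF idx_finite nn] unfolding nr_metric_def by simp
  hence orth: "\<forall>z\<in>\<Union>(index_spaces br K). cartanQ br K v z = 0"
  proof (intro ballI)
    fix z assume h: "\<forall>U\<in>index_spaces br K. c U * Qrestr br K U v v = 0" and z: "z \<in> \<Union>(index_spaces br K)"
    then obtain U where U: "U \<in> index_spaces br K" "z \<in> U" by blast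
    have "Qrestr br K U v v = 0" using h U cpos[OF U(1)] by auto
    hence "qproj br K U v = 0" unfolding Qrestr_def using Qpos by force
    thus "cartanQ br K v z = 0" using qproj[OF idx_sub[OF U(1)], of v] U by simp
  qed
  have "subspace {z. cartanQ br K v z = 0}"
    unfolding subspace_def by (auto simp: bilinear_radd[OF Qb] bilinear_rmul[OF Qb] bilinear_rzero[OF Qb])
  hence "span (\<Union>(index_spaces br K)) \<subseteq> {z. cartanQ br K v z = 0}"
    using orth by (intro span_minimal) auto
  hence "cartanQ br K v v = 0" using span_idx[of v] by blast
  thus "v = 0" using Qpos by force
qed

end

locale metric_setting =
  fixes br :: "'a::euclidean_space \<Rightarrow> 'a \<Rightarrow> 'a" and g :: "'a \<Rightarrow> 'a \<Rightarrow> real"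
  assumes brb: "bilinear br" and gb: "bilinear g" and gnd: "\<forall>v. g v v = 0 \<longrightarrow> v = 0"
begin

definition kos where "kos X Y Z = (g (br X Y) Z - g (br Y Z) X + g (br Z X) Y) / 2"

lemma kos_linZ: "linear (kos X Y)"
proof (rule linearI)
  fix a b show "kos X Y (a + b) = kos X Y a + kos X Y b"
    unfolding kos_def
    by (simp add: bilinear_radd[OF gb] bilinear_ladd[OF gb] bilinear_radd[OF brb] bilinear_ladd[OF brb] field_simps)
next
  fix r a show "kos X Y (r *\<^sub>R a) = r *\<^sub>R kos X Y a"
    unfolding kos_def
    by (simp add: bilinear_rmul[OF gb] bilinear_lmul[OF gb] bilinear_rmul[OF brb] bilinear_lmul[OF brb] field_simps)
qed

lemma kos_addX: "kos (X1 + X2) Y Z = kos X1 Y Z + kos X2 Y Z"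
  unfolding kos_def
  by (simp add: bilinear_radd[OF gb] bilinear_ladd[OF gb] bilinear_radd[OF brb] bilinear_ladd[OF brb] field_simps)
lemma kos_scaleX: "kos (r *\<^sub>R X) Y Z = r * kos X Y Z"
  unfolding kos_def
  by (simp add: bilinear_rmul[OF gb] bilinear_lmul[OF gb] bilinear_rmul[OF brb] bilinear_lmul[OF brb] field_simps)
lemma kos_addY: "kos X (Y1 + Y2) Z = kos X Y1 Z + kos X Y2 Z"
  unfolding kos_def
  by (simp add: bilinear_radd[OF gb] bilinear_ladd[OF gb] bilinear_radd[OF brb] bilinear_ladd[OF brb] field_simps)
lemma kos_scaleY: "kos X (r *\<^sub>R Y) Z = r * kos X Y Z"
  unfolding kos_def
  by (simp add: bilinear_rmul[OF gb] bilinear_lmul[OF gb] bilinear_rmul[OF brb] bilinear_lmul[OF brb] field_simps)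

lemma lc_ex1: "\<exists>!v. \<forall>Z. g v Z = kos X Y Z"
  by (rule riesz[OF gb gnd kos_linZ])

lemma lc_spec: "g (levi_civita br g X Y) Z = kos X Y Z"
proof -
  have "\<forall>Z. g (levi_civita br g X Y) Z = kos X Y Z"
    unfolding levi_civita_def kos_def[symmetric] by (rule theI'[OF lc_ex1])
  thus ?thesis by simp
qed

lemma lc_eq: "(\<And>Z. g v Z = kos X Y Z) \<Longrightarrow> levi_civita br g X Y = v"
  using lc_ex1[of X Y] lc_spec[of X Y] by blast

lemma lc_addX: "levi_civita br g (X1 + X2) Y = levi_civita br g X1 Y + levi_civita br g X2 Y"
  by (rule lc_eq) (simp add: bilinear_ladd[OF gb] lc_spec kos_addX)
lemma lc_scaleX: "levi_civita br g (r *\<^sub>R X) Y = r *\<^sub>R levi_civita br g X Y"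
  by (rule lc_eq) (simp add: bilinear_lmul[OF gb] lc_spec kos_scaleX)
lemma lc_addY: "levi_civita br g X (Y1 + Y2) = levi_civita br g X Y1 + levi_civita br g X Y2"
  by (rule lc_eq) (simp add: bilinear_ladd[OF gb] lc_spec kos_addY)
lemma lc_scaleY: "levi_civita br g X (r *\<^sub>R Y) = r *\<^sub>R levi_civita br g X Y"
  by (rule lc_eq) (simp add: bilinear_lmul[OF gb] lc_spec kos_scaleY)

lemma riem_addY: "riem br g X (Y1 + Y2) Z = riem br g X Y1 Z + riem br g X Y2 Z"
  unfolding riem_def by (simp add: lc_addX lc_addY bilinear_radd[OF brb] algebra_simps)
lemma riem_scaleY: "riem br g X (r *\<^sub>R Y) Z = r *\<^sub>R riem br g X Y Z"
  unfolding riem_def by (simp add: lc_scaleX lc_scaleY bilinear_rmul[OF brb] algebra_simps)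
lemma riem_addZ: "riem br g X Y (Z1 + Z2) = riem br g X Y Z1 + riem br g X Y Z2"
  unfolding riem_def by (simp add: lc_addY algebra_simps)
lemma riem_scaleZ: "riem br g X Y (r *\<^sub>R Z) = r *\<^sub>R riem br g X Y Z"
  unfolding riem_def by (simp add: lc_scaleY algebra_simps)

lemma ricci_bilinear: "bilinear (ricci br g)"
  unfolding bilinear_def ricci_def
proof (intro conjI allI)
  fix Y show "linear (\<lambda>Z. ltrace (\<lambda>X. riem br g X Y Z))"
    by (rule linearI) (simp_all add: riem_addZ riem_scaleZ ltrace_add ltrace_scale)
next
  fix Z show "linear (\<lambda>Y. ltrace (\<lambda>X. riem br g X Y Z))"
    by (rule linearI) (simp_all add: riem_addY riem_scaleY ltrace_add ltrace_scale)
qed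

lemma mt_scale:
  assumes b: "bilinear b" and s: "s \<noteq> 0"
  shows "metric_trace (\<lambda>x y. s * g x y) b = metric_trace g b / s"
proof -
  have ex1: "\<exists>!v. \<forall>y. g v y = b x y" for x
    by (rule riesz[OF gb gnd]) (use b in \<open>simp add: bilinear_def\<close>)
  define A where "A x = (THE v. \<forall>y. g v y = b x y)" for x
  have Aspec: "g (A x) y = b x y" for x y
    using theI'[OF ex1[of x]] unfolding A_def by blast
  have Aeq: "(\<And>y. g v y = b x y) \<Longrightarrow> A x = v" for v x
    using ex1[of x] Aspec by blast
  have Alin: "linear A"
  proof (rule linearI)
    fix x1 x2 show "A (x1 + x2) = A x1 + A x2"
      by (rule Aeq) (simp add: bilinear_ladd[OF gb] bilinear_ladd[OF b] Aspec)
  next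
    fix r x show "A (r *\<^sub>R x) = r *\<^sub>R A x"
      by (rule Aeq) (simp add: bilinear_lmul[OF gb] bilinear_lmul[OF b] Aspec)
  qed
  have t1: "(THE A. linear A \<and> (\<forall>x y. g (A x) y = b x y)) = A"
  proof (rule the_equality)
    show "linear A \<and> (\<forall>x y. g (A x) y = b x y)" using Alin Aspec by blast
    fix A' assume "linear A' \<and> (\<forall>x y. g (A' x) y = b x y)"
    thus "A' = A" using Aeq by (metis ext)
  qed
  define As where "As x = (1 / s) *\<^sub>R A x" for x
  have t2: "(THE A. linear A \<and> (\<forall>x y. s * g (A x) y = b x y)) = As"
  proof (rule the_equality)
    show "linear As \<and> (\<forall>x y. s * g (As x) y = b x y)"
    proof
      show "linear As" unfolding As_def[abs_def] using Alin by (simp add: linear_compose_scale_right)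
      show "\<forall>x y. s * g (As x) y = b x y" unfolding As_def using s
        by (simp add: bilinear_lmul[OF gb] Aspec)
    qed
    fix A' assume h: "linear A' \<and> (\<forall>x y. s * g (A' x) y = b x y)"
    show "A' = As"
    proof
      fix x
      have "A x = s *\<^sub>R A' x" by (rule Aeq) (use h in \<open>simp add: bilinear_lmul[OF gb]\<close>)
      thus "A' x = As x" unfolding As_def using s by simp
    qed
  qed
  show ?thesis
    unfolding metric_trace_def t1 t2 As_def using ltrace_scale[of "1/s" A] by simp
qed

end

lemma lc_scale_inv:
  assumes s: "s \<noteq> (0::real)"
  shows "levi_civita br (\<lambda>x y. s * g x y) = levi_civita br g"
proof (intro ext)
  fix X Y
  have "(s * g v Z = (s * g (br X Y) Z - s * g (br Y Z) X + s * g (br Z X) Y) / 2) \<longleftrightarrow>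
        (g v Z = (g (br X Y) Z - g (br Y Z) X + g (br Z X) Y) / 2)" for v Z
  proof -
    have e: "(s * g (br X Y) Z - s * g (br Y Z) X + s * g (br Z X) Y) / 2
          = s * ((g (br X Y) Z - g (br Y Z) X + g (br Z X) Y) / 2)" by (simp add: field_simps)
    show ?thesis unfolding e mult_cancel_left using s by simp
  qed
  thus "levi_civita br (\<lambda>x y. s * g x y) X Y = levi_civita br g X Y"
    unfolding levi_civita_def by simp
qed

lemma ricci_scale_inv:
  "s \<noteq> (0::real) \<Longrightarrow> ricci br (\<lambda>x y. s * g x y) = ricci br g"
  unfolding ricci_def[abs_def] riem_def[abs_def] lc_scale_inv by simp

lemma scalar_scale:
  assumes "metric_setting br g" and s: "s \<noteq> 0"
  shows "scalar_curv br (\<lambda>x y. s * g x y) = scalar_curv br g / s"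
  unfolding scalar_curv_def ricci_scale_inv[OF s]
  by (rule metric_setting.mt_scale[OF assms(1) metric_setting.ricci_bilinear[OF assms(1)] s])

theorem proposition5p7:
  fixes br :: "'a::euclidean_space \<Rightarrow> 'a \<Rightarrow> 'a"
    and K :: "'a set"
    and T :: "'a \<Rightarrow> 'a \<Rightarrow> real"
    and c :: "'a set \<Rightarrow> real"
  assumes "simple_lie_algebra br"
    and "noncompact_lie_algebra br"
    and "cartan_subalgebra_k br K"
    and "bilinear T" and "\<forall>x y. T x y = T y x"
    and "critical_S_MT0 br K T c"
  shows "scalar_curv br (nr_metric br K c) = 0"
proof -
  interpret cartan_setting br K
    using assms(1,3) by unfold_locales (simp_all add: simple_lie_algebra_def)
  have crit: "critical_S_MT0 br K T c" by (rule assms(6))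
  have MT0: "in_MT0 br K T c" using crit by (simp add: critical_S_MT0_def)
  have MK: "in_MK br K c" using MT0 by (simp add: in_MT0_def)
  have tr0: "metric_trace (nr_metric br K c) T = 0" using MT0 by (simp add: in_MT0_def)
  define g where "g = nr_metric br K c"
  have ms: "metric_setting br g"
    unfolding metric_setting_def g_def using brb nr_bilinear nr_nd[OF MK] by blast
  define \<gamma> :: "real \<Rightarrow> 'a set \<Rightarrow> real" where "\<gamma> t U = (1 + t) * c U" for t U
  have nrs: "nr_metric br K (\<gamma> t) = (\<lambda>x y. (1 + t) * g x y)" for t
    unfolding nr_metric_def g_def \<gamma>_def by (simp add: sum_distrib_left mult.assoc)
  define S0 where "S0 = scalar_curv br g"
  have Sg: "scalar_curv br (nr_metric br K (\<gamma> t)) = S0 / (1 + t)" if t: "t > -1" for t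
    unfolding nrs S0_def by (rule scalar_scale[OF ms]) (use t in simp)
  have inM: "in_MT0 br K T (\<gamma> t)" if t: "\<bar>t\<bar> < 1" for t
  proof -
    have tp: "1 + t > 0" using t by simp
    have "in_MK br K (\<gamma> t)" using MK tp unfolding in_MK_def \<gamma>_def by simp
    moreover have "metric_trace (nr_metric br K (\<gamma> t)) T = 0"
      unfolding nrs using metric_setting.mt_scale[OF ms assms(4), of "1 + t"] tp tr0 g_def by simp
    ultimately show ?thesis by (simp add: in_MT0_def)
  qed
  have diff: "(\<lambda>t. \<gamma> t U) differentiable (at 0)" for U
  proof -
    have "((\<lambda>t. \<gamma> t U) has_real_derivative c U) (at 0)"
      unfolding \<gamma>_def by (auto intro!: derivative_eq_intros)
    thus ?thesis unfolding has_field_derivative_def by (rule differentiableI)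
  qed
  have D0: "((\<lambda>t. scalar_curv br (nr_metric br K (\<gamma> t))) has_real_derivative 0) (at 0)"
    using crit unfolding critical_S_MT0_def
    apply (elim conjE)
    apply (drule spec[of _ \<gamma>], drule spec[of _ 1])
    using inM diff by (simp add: \<gamma>_def)
  have D1: "((\<lambda>t. S0 / (1 + t)) has_real_derivative - S0) (at 0)"
    by (auto intro!: derivative_eq_intros)
  have D2: "((\<lambda>t. scalar_curv br (nr_metric br K (\<gamma> t))) has_real_derivative - S0) (at 0)"
    by (rule has_field_derivative_transform_within_open[OF D1, of "{-1<..}"]) (auto simp: Sg)
  have "- S0 = 0" using DERIV_unique[OF D2 D0] .
  thus ?thesis unfolding S0_def g_def by simp
qed

end
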